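(* Consider a family, indexed by the number of qubits $n$, of parametrized $n$-qubit states $\widetilde{\rho} = \rho(\vec{\alpha})$ depending on a random variable $\vec{\alpha}$, and a POVM $\mathcal{M} = \{M_k\}_{k=1}^{|\mathcal{M}|}$ with $|\mathcal{M}| \in \mathcal{O}(\operatorname{poly}(n))$. Let $\mathbb{P}_{\vec{\alpha}} = (p_1(\vec{\alpha}), \dots, p_{|\mathcal{M}|}(\vec{\alpha}))$ with $p_k(\vec{\alpha}) = \operatorname{Tr}[\widetilde{\rho} M_k]$ be the outcome distribution. Assume the outcome probabilities exponentially concentrate: there exist $\vec{\alpha}$-independent numbers $\mu_k$ and $\beta \in \mathcal{O}(\exp(-n))$ such that for every $k$ and every $\delta' > 0$, $$\Pr_{\vec{\alpha}}\big(|p_k(\vec{\alpha}) - \mu_k| \geq \delta'\big) \leq \frac{\beta}{\delta'^2},$$ and let $\mathbb{P}_{\rm fixed} = (\mu_1, \dots, \mu_{|\mathcal{M}|})$. Let $N \in \mathcal{O}(\operatorname{poly}(n))$, and suppose a set $\mathcal{S}_N$ of $N$ i.i.d. samples is drawn, with probability $1/2$ each, either from $\mathbb{P}_{\vec{\alpha}}$ (hypothesis $\mathcal{H}_0$) or from $\mathbb{P}_{\rm fixed}$ (hypothesis $\mathcal{H}_1$). Then, with probability at least $1-\delta$ over the choice of $\vec{\alpha}$, where $\delta = |\mathcal{M}|\sqrt{\beta} \in \mathcal{O}(\exp(-n))$, every procedure deciding between $\mathcal{H}_0$ and $\mathcal{H}_1$ from $\mathcal{S}_N$ makes the right decision with probability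 at most $\frac{1}{2} + \varepsilon$, where $\varepsilon = \frac{N|\mathcal{M}|\beta^{1/4}}{4} \in \mathcal{O}(\exp(-n))$. In particular, $\mathbb{P}_{\vec{\alpha}}$ and $\mathbb{P}_{\rm fixed}$ are then statistically indistinguishable with $N$ samples.
   Context: A POVM is a finite set of positive semidefinite operators summing to the identity; measuring it on a state $\rho$ yields outcome $k$ with probability $\operatorname{Tr}[\rho M_k]$. Two distributions $\mathbb{P},\mathbb{P}'$ are called statistically indistinguishable with $N$ samples if, given $N$ i.i.d. samples drawn (with equal prior probability) all from $\mathbb{P}$ or all from $\mathbb{P}'$, no algorithm identifies the correct source with probability greater than $0.51$. Asymptotic notation refers to $n \to \infty$. *)

theory Defs
  imports "HOL-Probability.Probability" "HOL-Library.Landau_Symbols" "Jordan_Normal_Form.Matrix"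
begin

definition mat_trace :: "complex mat \<Rightarrow> complex" where
  "mat_trace A = (\<Sum>i<dim_row A. A $$ (i, i))"

definition psd_mat :: "nat \<Rightarrow> complex mat \<Rightarrow> bool" where
  "psd_mat d A \<longleftrightarrow> A \<in> carrier_mat d d \<and>
     (\<forall>v :: nat \<Rightarrow> complex.
        let q = (\<Sum>i<d. \<Sum>j<d. cnj (v i) * A $$ (i, j) * v j) in Im q = 0 \<and> Re q \<ge> 0)"

definition density_mat :: "nat \<Rightarrow> complex mat \<Rightarrow> bool" where
  "density_mat d \<rho> \<longleftrightarrow> psd_mat d \<rho> \<and> mat_trace \<rho> = 1"

definition is_POVM :: "nat \<Rightarrow> nat \<Rightarrow> (nat \<Rightarrow> complex mat) \<Rightarrow> bool" where
  "is_POVM d m M \<longleftrightarrow> (\<forall>k<m. psd_mat d (M k)) \<and>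
     (\<forall>i<d. \<forall>j<d. (\<Sum>k<m. M k $$ (i, j)) = 1\<^sub>m d $$ (i, j))"

text \<open>Outcome probability Tr[rho M_k] (real for PSD rho, M_k).\<close>
definition outcome_prob :: "complex mat \<Rightarrow> complex mat \<Rightarrow> real" where
  "outcome_prob \<rho> Mk = Re (mat_trace (\<rho> * Mk))"

definition samples :: "nat \<Rightarrow> nat \<Rightarrow> nat list set" where
  "samples m N = {xs. length xs = N \<and> set xs \<subseteq> {..<m}}"

definition sample_prob :: "(nat \<Rightarrow> real) \<Rightarrow> nat list \<Rightarrow> real" where
  "sample_prob P xs = (\<Prod>x\<leftarrow>xs. P x)"

text \<open>Success probability of a (possibly randomized) test D, where D xs \<in> [0,1] is the
  probability of answering H0 (source P) on samples xs; equal priors on P (H0) and Q (H1).\<close>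
definition success_prob ::
  "nat \<Rightarrow> nat \<Rightarrow> (nat \<Rightarrow> real) \<Rightarrow> (nat \<Rightarrow> real) \<Rightarrow> (nat list \<Rightarrow> real) \<Rightarrow> real" where
  "success_prob m N P Q D =
     1/2 * (\<Sum>xs\<in>samples m N. sample_prob P xs * D xs)
   + 1/2 * (\<Sum>xs\<in>samples m N. sample_prob Q xs * (1 - D xs))"

definition is_test :: "(nat list \<Rightarrow> real) \<Rightarrow> bool" where
  "is_test D \<longleftrightarrow> (\<forall>xs. 0 \<le> D xs \<and> D xs \<le> 1)"

definition stat_indist :: "nat \<Rightarrow> nat \<Rightarrow> (nat \<Rightarrow> real) \<Rightarrow> (nat \<Rightarrow> real) \<Rightarrow> bool" where
  "stat_indist m N P Q \<longleftrightarrow> (\<forall>D. is_test D \<longrightarrow> success_prob m N P Q D \<le> 51/100)"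

end

theory Submission
  imports Defs "HOL-Real_Asymp.Real_Asymp"
begin


definition Qf :: "nat \<Rightarrow> (nat \<Rightarrow> nat \<Rightarrow> complex) \<Rightarrow> (nat \<Rightarrow> complex) \<Rightarrow> complex" where
  "Qf d a v = (\<Sum>i<d. \<Sum>j<d. cnj (v i) * a i j * v j)"

definition psdf :: "nat \<Rightarrow> (nat \<Rightarrow> nat \<Rightarrow> complex) \<Rightarrow> bool" where
  "psdf d a \<longleftrightarrow> (\<forall>v. Im (Qf d a v) = 0 \<and> Re (Qf d a v) \<ge> 0)"

lemma sum_two:
  fixes d :: nat
  assumes "i<d" "j<d" "i\<noteq>j" "\<And>l. l<d \<Longrightarrow> l\<noteq>i \<Longrightarrow> l\<noteq>j \<Longrightarrow> f l = 0"
  shows "sum f {..<d} = f i + f j"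
proof -
  have "sum f {..<d} = sum f {i,j}" using assms by (intro sum.mono_neutral_right) auto
  then show ?thesis using assms by simp
qed

lemma sum_one:
  fixes d :: nat
  assumes "i<d" "\<And>l. l<d \<Longrightarrow> l\<noteq>i \<Longrightarrow> f l = 0"
  shows "sum f {..<d} = f i"
proof -
  have "sum f {..<d} = sum f {i}" using assms by (intro sum.mono_neutral_right) auto
  then show ?thesis using assms by simp
qed

lemma Qf_two:
  assumes "i<d" "j<d" "i\<noteq>j"
  shows "Qf d a (\<lambda>l. if l=i then x else if l=j then y else 0) =
    cnj x * a i i * x + cnj x * a i j * y + cnj y * a j i * x + cnj y * a j j * y"
proof -
  let ?v = "\<lambda>l. if l=i then x else if l=j then y else 0"
  have inner: "(\<Sum>j'<d. cnj (?v l) * a l j' * ?v j') = cnj (?v l) * a l i * x + cnj (?v l) * a l j * y" for l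
    by (subst sum_two[OF assms]) (use assms in auto)
  show ?thesis unfolding Qf_def inner
    by (subst sum_two[OF assms]) (use assms in \<open>auto simp: algebra_simps\<close>)
qed

lemma Qf_one:
  assumes "i<d"
  shows "Qf d a (\<lambda>l. if l=i then x else 0) = cnj x * a i i * x"
proof -
  let ?v = "\<lambda>l. if l=i then x else 0"
  have inner: "(\<Sum>j'<d. cnj (?v l) * a l j' * ?v j') = cnj (?v l) * a l i * x" for l
    by (subst sum_one[OF assms]) (use assms in auto)
  show ?thesis unfolding Qf_def inner
    by (subst sum_one[OF assms]) (use assms in auto)
qed

lemma psdf_diag:
  assumes "psdf d a" "i<d" shows "Im (a i i) = 0" "Re (a i i) \<ge> 0"
  using assms(1) Qf_one[OF assms(2), of a 1] unfolding psdf_def by (metis mult_1 mult_1_right complex_cnj_one)+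

lemma psdf_herm:
  assumes "psdf d a" "i<d" "j<d" shows "a j i = cnj (a i j)"
proof (cases "i = j")
  case True then show ?thesis using psdf_diag[OF assms(1,2)] by (simp add: complex_eq_iff)
next
  case False
  have d1: "Im (a i i) = 0" "Im (a j j) = 0" using psdf_diag assms by auto
  have "Im (Qf d a (\<lambda>l. if l=i then 1 else if l=j then 1 else 0)) = 0" using assms(1) psdf_def by blast
  then have 1: "Im (a i j) + Im (a j i) = 0" using Qf_two[OF assms(2,3) False, of a 1 1] d1 by simp
  have "Im (Qf d a (\<lambda>l. if l=i then 1 else if l=j then \<i> else 0)) = 0" using assms(1) psdf_def by blast
  then have 2: "Re (a i j) - Re (a j i) = 0" using Qf_two[OF assms(2,3) False, of a 1 \<i>] d1 by simp
  show ?thesis using 1 2 by (simp add: complex_eq_iff)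
qed

lemma psdf_zero_row:
  assumes "psdf d a" "n<d" "a n n = 0" "j<d" shows "a n j = 0"
proof (rule ccontr)
  assume ne: "a n j \<noteq> 0"
  then have jn: "j \<noteq> n" using assms by auto
  let ?b = "a n j"
  have nb: "cmod ?b ^ 2 > 0" using ne by simp
  define t where "t = (\<bar>Re (a j j)\<bar> + 1) / (2 * cmod ?b ^ 2)"
  have h: "a j n = cnj ?b" using psdf_herm assms by blast
  have "Re (Qf d a (\<lambda>l. if l=n then - (of_real t * ?b) else if l=j then 1 else 0)) \<ge> 0"
    using assms(1) psdf_def by blast
  then have "Re (a j j) - 2 * t * (Re ?b ^ 2 + Im ?b ^ 2) \<ge> 0"
    using Qf_two[OF assms(2,4) jn[symmetric], of a "- (of_real t * ?b)" 1] h assms(3)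
    by (simp add: algebra_simps power2_eq_square)
  then have "Re (a j j) - 2 * t * cmod ?b ^ 2 \<ge> 0" by (simp add: cmod_power2)
  moreover have "2 * t * cmod ?b ^ 2 = \<bar>Re (a j j)\<bar> + 1" unfolding t_def using nb by simp
  ultimately show False by linarith
qed

lemma Qf_shift:
  assumes "n<d"
  shows "Qf d a (\<lambda>l. v l + (if l = n then t else 0)) = Qf d a v + cnj t * (\<Sum>j<d. a n j * v j)
     + (\<Sum>i<d. cnj (v i) * a i n) * t + cnj t * a n n * t"
proof -
  have e: "cnj (v i + (if i = n then t else 0)) * a i j * (v j + (if j = n then t else 0)) =
     cnj (v i) * a i j * v j + (if i = n then cnj t * a n j * v j else 0)
     + (if j = n then cnj (v i) * a i n * t else 0) + (if i = n then (if j = n then cnj t * a n n * t else 0) else 0)" for i j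
    by (auto simp: algebra_simps)
  have s1: "(\<Sum>i<d. (if i = n then f i else 0)) = f n" for f :: "nat \<Rightarrow> complex"
    using assms by (simp add: sum.delta)
  have s2: "(\<Sum>i<d. (if n = i then f i else 0)) = f n" for f :: "nat \<Rightarrow> complex"
    using assms by (simp add: sum.delta)
  have s0: "(\<Sum>j<d. (if P then f j else 0)) = (if P then (\<Sum>j<d. f j) else 0)" for P and f :: "nat \<Rightarrow> complex"
    by simp
  show ?thesis unfolding Qf_def e sum.distrib s0 s1
    using assms by (simp add: sum_distrib_left sum_distrib_right mult.assoc)
qed

lemma Qf_sub:
  "Qf d (\<lambda>i j. a i j - w i * cnj (w j)) v = Qf d a v - (\<Sum>i<d. cnj (v i) * w i) * (\<Sum>j<d. cnj (w j) * v j)"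
  unfolding Qf_def by (simp add: algebra_simps sum_subtractf sum_distrib_left sum_distrib_right)

lemma psdf_decomp_aux:
  assumes "k \<le> d"
  shows "\<forall>a. psdf d a \<longrightarrow> (\<forall>i<d. \<forall>j<d. (i<k \<or> j<k) \<longrightarrow> a i j = 0) \<longrightarrow>
     (\<exists>(K::nat) vs. \<forall>i<d. \<forall>j<d. a i j = (\<Sum>l<K. vs l i * cnj (vs l j)))"
  using assms
proof (induction k rule: inc_induct)
  case base
  show ?case
  proof (intro allI impI)
    fix a :: "nat \<Rightarrow> nat \<Rightarrow> complex"
    assume "psdf d a" "\<forall>i<d. \<forall>j<d. (i<d \<or> j<d) \<longrightarrow> a i j = 0"
    then have "\<forall>i<d. \<forall>j<d. a i j = 0"
      by simp
    then show "\<exists>(K::nat) vs. \<forall>i<d. \<forall>j<d. a i j = (\<Sum>l<K. vs l i * cnj (vs l j))"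
      by (intro exI[where x="0::nat"]) simp
  qed
next
  case (step n)
  show ?case
  proof (intro allI impI)
    fix a assume psd: "psdf d a" and z: "\<forall>i<d. \<forall>j<d. (i<n \<or> j<n) \<longrightarrow> a i j = 0"
    have nd: "n < d" using step by simp
    show "\<exists>(K::nat) vs. \<forall>i<d. \<forall>j<d. a i j = (\<Sum>l<K. vs l i * cnj (vs l j))"
    proof (cases "a n n = 0")
      case True
      have r: "a n j = 0" if "j<d" for j using psdf_zero_row[OF psd nd True that] .
      have c: "a j n = 0" if "j<d" for j using psdf_herm[OF psd nd that] r[OF that] by simp
      have "\<forall>i<d. \<forall>j<d. (i<Suc n \<or> j<Suc n) \<longrightarrow> a i j = 0" using z r c by (auto simp: less_Suc_eq)
      then show ?thesis using step.IH psd by blast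
    next
      case False
      define c where "c = Re (a n n)"
      have cpos: "c > 0" and ac: "a n n = of_real c"
        using psdf_diag[OF psd nd] False by (auto simp: c_def complex_eq_iff)
      define s where "s = sqrt c"
      have ss: "s * s = c" using cpos by (simp add: s_def)
      have spos: "s > 0" using cpos by (simp add: s_def)
      define w where "w i = a i n / of_real s" for i
      define a' where "a' i j = a i j - w i * cnj (w j)" for i j
      have hj: "a n j = cnj (a j n)" if "j<d" for j using psdf_herm[OF psd that nd] .
      have wprod: "w i * cnj (w j) = a i n * a n j / of_real c" if "j<d" for i j
      proof -
        have "w i * cnj (w j) = a i n * cnj (a j n) / (of_real s * of_real s)"
          by (simp add: w_def)
        also have "\<dots> = a i n * a n j / of_real c" using hj[OF that] ss
          by (metis of_real_mult)
        finally show ?thesis .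
      qed
      have psd': "psdf d a'"
        unfolding psdf_def
      proof
        fix v
        define S where "S = (\<Sum>j<d. a n j * v j)"
        define t where "t = - S / of_real c"
        have cS: "(\<Sum>i<d. cnj (v i) * a i n) = cnj S"
          unfolding S_def by (simp add: hj mult.commute)
        have w1: "(\<Sum>i<d. cnj (v i) * w i) = cnj S / of_real s"
        proof -
          have "(\<Sum>i<d. cnj (v i) * w i) = (\<Sum>i<d. cnj (v i) * a i n) / of_real s"
            by (simp add: w_def sum_divide_distrib)
          then show ?thesis using cS by simp
        qed
        have w2: "(\<Sum>j<d. cnj (w j) * v j) = S / of_real s"
          unfolding S_def by (simp add: w_def sum_divide_distrib hj)
        have "Qf d a' v = Qf d a v - cnj S * S / of_real c"
          unfolding a'_def Qf_sub w1 w2 using ss by (simp add: of_real_mult[symmetric] del: of_real_mult)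
        also have "\<dots> = Qf d a (\<lambda>l. v l + (if l = n then t else 0))"
          unfolding Qf_shift[OF nd] cS S_def[symmetric] ac t_def using cpos
          by (simp add: field_simps)
        finally show "Im (Qf d a' v) = 0 \<and> Re (Qf d a' v) \<ge> 0" using psd unfolding psdf_def by simp
      qed
      have z': "\<forall>i<d. \<forall>j<d. (i<Suc n \<or> j<Suc n) \<longrightarrow> a' i j = 0"
      proof (intro allI impI)
        fix i j assume ij: "i<d" "j<d" "i<Suc n \<or> j<Suc n"
        have "i < n \<or> j < n \<or> i = n \<or> j = n" using ij by auto
        then show "a' i j = 0"
        proof (elim disjE)
          assume "i<n" then show ?thesis using z ij nd by (simp add: a'_def w_def)
        next
          assume "j<n" then show ?thesis using z ij nd by (simp add: a'_def w_def)
        next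
          assume "i=n" then show ?thesis using ij cpos by (simp add: a'_def wprod ac)
        next
          assume "j=n" then show ?thesis using ij cpos by (simp add: a'_def wprod ac)
        qed
      qed
      obtain K :: nat and vs where K: "\<forall>i<d. \<forall>j<d. a' i j = (\<Sum>l<K. vs l i * cnj (vs l j))"
        using step.IH psd' z' by blast
      show ?thesis
      proof (intro exI[of _ "Suc K"] exI[of _ "vs(K := w)"] allI impI)
        fix i j assume "i<d" "j<d"
        then have "a i j = a' i j + w i * cnj (w j)" by (simp add: a'_def)
        also have "\<dots> = (\<Sum>l<Suc K. (vs(K := w)) l i * cnj ((vs(K := w)) l j))"
          using K \<open>i<d\<close> \<open>j<d\<close> by simp
        finally show "a i j = (\<Sum>l<Suc K. (vs(K := w)) l i * cnj ((vs(K := w)) l j))" .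
      qed
    qed
  qed
qed

lemma psdf_decomp:
  assumes "psdf d a" shows "\<exists>(K::nat) vs. \<forall>i<d. \<forall>j<d. a i j = (\<Sum>l<K. vs l i * cnj (vs l j))"
  by (rule psdf_decomp_aux[of 0 d, rule_format, OF _ assms]) simp_all



lemma psd_psdf:
  assumes "psd_mat d A" shows "A \<in> carrier_mat d d" "psdf d (\<lambda>i j. A $$ (i,j))"
  using assms unfolding psd_mat_def psdf_def Qf_def Let_def by auto

lemma trace_mult:
  assumes "A \<in> carrier_mat d d" "B \<in> carrier_mat d d"
  shows "mat_trace (A*B) = (\<Sum>i<d. \<Sum>j<d. A$$(i,j) * B$$(j,i))"
  using assms unfolding mat_trace_def
  by (auto simp: scalar_prod_def atLeast0LessThan intro!: sum.cong)

lemma trace_psd_nonneg: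
  assumes R: "psd_mat d R" and B: "psd_mat d B"
  shows "Re (mat_trace (R * B)) \<ge> 0"
proof -
  obtain K :: nat and vs where K: "\<forall>i<d. \<forall>j<d. R$$(i,j) = (\<Sum>l<K. vs l i * cnj (vs l j))"
    using psdf_decomp[OF psd_psdf(2)[OF R]] by blast
  have "mat_trace (R * B) = (\<Sum>i<d. \<Sum>j<d. R$$(i,j) * B$$(j,i))"
    using trace_mult psd_psdf R B by blast
  also have "\<dots> = (\<Sum>i<d. \<Sum>j<d. \<Sum>l<K. cnj (vs l j) * B$$(j,i) * vs l i)"
    using K by (intro sum.cong refl) (simp add: sum_distrib_right sum_distrib_left mult_ac)
  also have "\<dots> = (\<Sum>i<d. \<Sum>l<K. \<Sum>j<d. cnj (vs l j) * B$$(j,i) * vs l i)"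
    by (rule sum.cong[OF refl], rule sum.swap)
  also have "\<dots> = (\<Sum>l<K. \<Sum>i<d. \<Sum>j<d. cnj (vs l j) * B$$(j,i) * vs l i)"
    by (rule sum.swap)
  also have "\<dots> = (\<Sum>l<K. \<Sum>j<d. \<Sum>i<d. cnj (vs l j) * B$$(j,i) * vs l i)"
    by (rule sum.cong[OF refl], rule sum.swap)
  also have "\<dots> = (\<Sum>l<K. Qf d (\<lambda>i j. B $$ (i,j)) (vs l))"
    unfolding Qf_def by simp
  finally have "Re (mat_trace (R * B)) = (\<Sum>l<K. Re (Qf d (\<lambda>i j. B $$ (i,j)) (vs l)))"
    by simp
  also have "\<dots> \<ge> 0" using psd_psdf(2)[OF B] unfolding psdf_def by (intro sum_nonneg) auto
  finally show ?thesis .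
qed

lemma outcome_nonneg:
  assumes "density_mat d R" "is_POVM d m Mk" "k < m"
  shows "outcome_prob R (Mk k) \<ge> 0"
  using assms trace_psd_nonneg unfolding density_mat_def is_POVM_def outcome_prob_def by blast

lemma povm_sum:
  assumes R: "density_mat d R" and P: "is_POVM d m Mk"
  shows "(\<Sum>k<m. outcome_prob R (Mk k)) = 1"
proof -
  have Rc: "R \<in> carrier_mat d d" using R psd_psdf unfolding density_mat_def by blast
  have Mc: "Mk k \<in> carrier_mat d d" if "k<m" for k using P psd_psdf that unfolding is_POVM_def by blast
  have id: "(\<Sum>k<m. Mk k $$ (j, i)) = (if j = i then 1 else 0)" if "i<d" "j<d" for i j
    using P that unfolding is_POVM_def by simp
  have "(\<Sum>k<m. outcome_prob R (Mk k)) = Re (\<Sum>k<m. \<Sum>i<d. \<Sum>j<d. R$$(i,j) * Mk k$$(j,i))"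
    unfolding outcome_prob_def Re_sum using trace_mult[OF Rc Mc] by simp
  also have "(\<Sum>k<m. \<Sum>i<d. \<Sum>j<d. R$$(i,j) * Mk k$$(j,i)) = (\<Sum>i<d. \<Sum>k<m. \<Sum>j<d. R$$(i,j) * Mk k$$(j,i))"
    by (rule sum.swap)
  also have "\<dots> = (\<Sum>i<d. \<Sum>j<d. \<Sum>k<m. R$$(i,j) * Mk k$$(j,i))"
    by (rule sum.cong[OF refl], rule sum.swap)
  also have "\<dots> = (\<Sum>i<d. \<Sum>j<d. R$$(i,j) * (if j = i then 1 else 0))"
    by (intro sum.cong refl) (simp add: sum_distrib_left[symmetric] id)
  also have "\<dots> = (\<Sum>i<d. R$$(i,i))"
  proof (rule sum.cong[OF refl])
    fix i assume "i \<in> {..<d}"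
    then show "(\<Sum>j<d. R$$(i,j) * (if j = i then 1 else 0)) = R$$(i,i)"
      by (subst sum_one[of i]) auto
  qed
  also have "\<dots> = mat_trace R" using Rc unfolding mat_trace_def by simp
  finally show ?thesis using R unfolding density_mat_def by simp
qed



lemma finite_samples: "finite (samples m N)"
  unfolding samples_def using finite_lists_length_eq[of "{..<m}" N] by (simp add: conj_commute)

lemma samples_0: "samples m 0 = {[]}" by (auto simp: samples_def)

lemma samples_Suc: "samples m (Suc N) = (\<lambda>p. fst p # snd p) ` ({..<m} \<times> samples m N)"
proof
  show "samples m (Suc N) \<subseteq> (\<lambda>p. fst p # snd p) ` ({..<m} \<times> samples m N)"
  proof
    fix xs assume "xs \<in> samples m (Suc N)"
    then obtain y ys where "xs = y # ys" "length ys = N" "y < m" "set ys \<subseteq> {..<m}"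
      unfolding samples_def by (auto simp: length_Suc_conv)
    then show "xs \<in> (\<lambda>p. fst p # snd p) ` ({..<m} \<times> samples m N)"
      unfolding samples_def by (intro image_eqI[of _ _ "(y, ys)"]) auto
  qed
  show "(\<lambda>p. fst p # snd p) ` ({..<m} \<times> samples m N) \<subseteq> samples m (Suc N)"
    unfolding samples_def by auto
qed

lemma sum_samples_Suc:
  "sum f (samples m (Suc N)) = (\<Sum>x<m. \<Sum>xs\<in>samples m N. f (x#xs))"
proof -
  have inj: "inj_on (\<lambda>p. fst p # snd p) ({..<m} \<times> samples m N)"
    by (auto simp: inj_on_def prod_eq_iff)
  have "sum f (samples m (Suc N)) = (\<Sum>p\<in>{..<m} \<times> samples m N. f (fst p # snd p))"
    unfolding samples_Suc sum.reindex[OF inj] by (simp add: comp_def)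
  also have "\<dots> = (\<Sum>x<m. \<Sum>xs\<in>samples m N. f (x#xs))"
    by (subst sum.cartesian_product) (simp add: case_prod_beta)
  finally show ?thesis .
qed

lemma sample_prob_Cons[simp]: "sample_prob p (x#xs) = p x * sample_prob p xs"
  by (simp add: sample_prob_def)

lemma sample_prob_Nil[simp]: "sample_prob p [] = 1"
  by (simp add: sample_prob_def)

lemma sum_sample_prob:
  assumes "(\<Sum>k<m. p k) = 1"
  shows "(\<Sum>xs\<in>samples m N. sample_prob p xs) = 1"
proof (induction N)
  case 0 then show ?case by (simp add: samples_0)
next
  case (Suc N)
  then show ?case using assms by (simp add: sum_samples_Suc sum_distrib_left[symmetric])
qed

lemma sample_prob_nonneg:
  assumes "\<forall>k<m. p k \<ge> 0" "xs \<in> samples m N"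
  shows "sample_prob p xs \<ge> 0"
  using assms unfolding sample_prob_def samples_def by (auto simp: subset_iff intro!: prod_list_nonneg)

lemma l1_samples:
  assumes p0: "\<forall>k<m. p k \<ge> 0" and q0: "\<forall>k<m. q k \<ge> 0"
    and p1: "(\<Sum>k<m. p k) = 1" and q1: "(\<Sum>k<m. q k) = 1"
  shows "(\<Sum>xs\<in>samples m N. \<bar>sample_prob p xs - sample_prob q xs\<bar>) \<le> real N * (\<Sum>k<m. \<bar>p k - q k\<bar>)"
proof (induction N)
  case 0 then show ?case by (simp add: samples_0)
next
  case (Suc N)
  let ?L = "(\<Sum>k<m. \<bar>p k - q k\<bar>)"
  let ?S = "(\<Sum>xs\<in>samples m N. \<bar>sample_prob p xs - sample_prob q xs\<bar>)"
  have pt: "\<bar>p x * sample_prob p xs - q x * sample_prob q xs\<bar>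
      \<le> \<bar>p x - q x\<bar> * sample_prob p xs + q x * \<bar>sample_prob p xs - sample_prob q xs\<bar>"
    if "x < m" "xs \<in> samples m N" for x xs
  proof -
    have P: "sample_prob p xs \<ge> 0" using sample_prob_nonneg[OF p0 that(2)] .
    have Q: "q x \<ge> 0" using q0 that by auto
    have "p x * sample_prob p xs - q x * sample_prob q xs
        = (p x - q x) * sample_prob p xs + q x * (sample_prob p xs - sample_prob q xs)"
      by (simp add: algebra_simps)
    also have "\<bar>\<dots>\<bar> \<le> \<bar>(p x - q x) * sample_prob p xs\<bar> + \<bar>q x * (sample_prob p xs - sample_prob q xs)\<bar>"
      by (rule abs_triangle_ineq)
    also have "\<dots> = \<bar>p x - q x\<bar> * sample_prob p xs + q x * \<bar>sample_prob p xs - sample_prob q xs\<bar>"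
      using P Q by (simp add: abs_mult)
    finally show ?thesis .
  qed
  have "(\<Sum>xs\<in>samples m (Suc N). \<bar>sample_prob p xs - sample_prob q xs\<bar>)
      = (\<Sum>x<m. \<Sum>xs\<in>samples m N. \<bar>p x * sample_prob p xs - q x * sample_prob q xs\<bar>)"
    by (simp add: sum_samples_Suc)
  also have "\<dots> \<le> (\<Sum>x<m. \<Sum>xs\<in>samples m N. \<bar>p x - q x\<bar> * sample_prob p xs + q x * \<bar>sample_prob p xs - sample_prob q xs\<bar>)"
    using pt by (intro sum_mono) auto
  also have "\<dots> = (\<Sum>x<m. \<bar>p x - q x\<bar> * (\<Sum>xs\<in>samples m N. sample_prob p xs) + q x * ?S)"
    by (simp add: sum.distrib sum_distrib_left)
  also have "\<dots> = ?L + (\<Sum>x<m. q x) * ?S"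
    using sum_sample_prob[OF p1] by (simp add: sum.distrib sum_distrib_right)
  also have "\<dots> = ?L + ?S" using q1 by simp
  also have "\<dots> \<le> ?L + real N * ?L" using Suc by simp
  also have "\<dots> = real (Suc N) * ?L" by (simp add: algebra_simps)
  finally show ?case .
qed

lemma success_bound:
  assumes D: "is_test D"
    and P1: "(\<Sum>xs\<in>samples m N. sample_prob p xs) = 1"
    and Q1: "(\<Sum>xs\<in>samples m N. sample_prob q xs) = 1"
  shows "success_prob m N p q D \<le> 1/2 + 1/4 * (\<Sum>xs\<in>samples m N. \<bar>sample_prob p xs - sample_prob q xs\<bar>)"
proof -
  have pt: "1/2 * (P * D xs) + 1/2 * (Q * (1 - D xs)) \<le> 1/4 * P + 1/4 * Q + 1/4 * \<bar>P - Q\<bar>" for P Q xs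
  proof -
    have d: "\<bar>2 * D xs - 1\<bar> \<le> 1" using D unfolding is_test_def by (auto simp: abs_if)
    have "(P - Q) * (2 * D xs - 1) \<le> \<bar>(P - Q) * (2 * D xs - 1)\<bar>" by simp
    also have "\<dots> = \<bar>P - Q\<bar> * \<bar>2 * D xs - 1\<bar>" by (simp add: abs_mult)
    also have "\<dots> \<le> \<bar>P - Q\<bar> * 1" by (rule mult_left_mono[OF d]) simp
    finally have "(P - Q) * (2 * D xs - 1) \<le> \<bar>P - Q\<bar>" by simp
    then show ?thesis by (simp add: algebra_simps)
  qed
  have "success_prob m N p q D = (\<Sum>xs\<in>samples m N. 1/2 * (sample_prob p xs * D xs) + 1/2 * (sample_prob q xs * (1 - D xs)))"
    unfolding success_prob_def by (simp add: sum.distrib sum_distrib_left)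
  also have "\<dots> \<le> (\<Sum>xs\<in>samples m N. 1/4 * sample_prob p xs + 1/4 * sample_prob q xs + 1/4 * \<bar>sample_prob p xs - sample_prob q xs\<bar>)"
    by (intro sum_mono pt)
  also have "\<dots> = 1/2 + 1/4 * (\<Sum>xs\<in>samples m N. \<bar>sample_prob p xs - sample_prob q xs\<bar>)"
    using P1 Q1 by (simp add: sum.distrib sum_divide_distrib[symmetric])
  finally show ?thesis .
qed

lemma success_close:
  assumes p0: "\<forall>k<m. p k \<ge> 0" and q0: "\<forall>k<m. q k \<ge> 0"
    and p1: "(\<Sum>k<m. p k) = 1" and q1: "(\<Sum>k<m. q k) = 1"
    and close: "\<forall>k<m. \<bar>p k - q k\<bar> \<le> r" and D: "is_test D"
  shows "success_prob m N p q D \<le> 1/2 + real N * real m * r / 4"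
proof -
  have "success_prob m N p q D \<le> 1/2 + 1/4 * (\<Sum>xs\<in>samples m N. \<bar>sample_prob p xs - sample_prob q xs\<bar>)"
    by (rule success_bound[OF D sum_sample_prob[OF p1] sum_sample_prob[OF q1]])
  also have "\<dots> \<le> 1/2 + 1/4 * (real N * (\<Sum>k<m. \<bar>p k - q k\<bar>))"
    using l1_samples[OF p0 q0 p1 q1, of N] by simp
  also have "(\<Sum>k<m. \<bar>p k - q k\<bar>) \<le> real m * r"
    using sum_bounded_above[of "{..<m}" "\<lambda>k. \<bar>p k - q k\<bar>" r] close by simp
  then have "1/2 + 1/4 * (real N * (\<Sum>k<m. \<bar>p k - q k\<bar>)) \<le> 1/2 + 1/4 * (real N * (real m * r))"
    by (simp add: mult_left_mono)
  finally show ?thesis by (simp add: algebra_simps)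
qed



theorem theorem2:
  fixes A :: "nat \<Rightarrow> 'a measure"
    and \<rho> :: "nat \<Rightarrow> 'a \<Rightarrow> complex mat"
    and M :: "nat \<Rightarrow> nat \<Rightarrow> complex mat"
    and m :: "nat \<Rightarrow> nat"
    and \<mu> :: "nat \<Rightarrow> nat \<Rightarrow> real"
    and \<beta> :: "nat \<Rightarrow> real"
    and N :: "nat \<Rightarrow> nat"
  assumes probsp: "\<And>n. prob_space (A n)"
    and states: "\<And>n \<alpha>. \<alpha> \<in> space (A n) \<Longrightarrow> density_mat (2 ^ n) (\<rho> n \<alpha>)"
    and povm: "\<And>n. is_POVM (2 ^ n) (m n) (M n)"
    and m_poly: "\<exists>d::nat. (\<lambda>n. real (m n)) \<in> O(\<lambda>n. real n ^ d)"
    and meas: "\<And>n k. k < m n \<Longrightarrow> (\<lambda>\<alpha>. outcome_prob (\<rho> n \<alpha>) (M n k)) \<in> borel_measurable (A n)"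
    and mu_dist: "\<And>n k. k < m n \<Longrightarrow> \<mu> n k \<ge> 0" "\<And>n. (\<Sum>k<m n. \<mu> n k) = 1"
    and conc: "\<And>n k \<delta>'. k < m n \<Longrightarrow> \<delta>' > 0 \<Longrightarrow>
        measure (A n) {\<alpha> \<in> space (A n). \<bar>outcome_prob (\<rho> n \<alpha>) (M n k) - \<mu> n k\<bar> \<ge> \<delta>'}
          \<le> \<beta> n / \<delta>'\<^sup>2"
    and beta_exp: "\<beta> \<in> O(\<lambda>n. exp (- real n))"
    and N_poly: "\<exists>d::nat. (\<lambda>n. real (N n)) \<in> O(\<lambda>n. real n ^ d)"
  shows "(\<forall>n. \<exists>E \<in> sets (A n).
            measure (A n) E \<ge> 1 - real (m n) * sqrt (\<beta> n) \<and>
            (\<forall>\<alpha> \<in> E. \<forall>D. is_test D \<longrightarrow>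
               success_prob (m n) (N n) (\<lambda>k. outcome_prob (\<rho> n \<alpha>) (M n k)) (\<mu> n) D
                 \<le> 1/2 + real (N n) * real (m n) * root 4 (\<beta> n) / 4))
    \<and> (\<exists>c>0. (\<lambda>n. real (m n) * sqrt (\<beta> n)) \<in> O(\<lambda>n. exp (- c * real n)))
    \<and> (\<exists>c>0. (\<lambda>n. real (N n) * real (m n) * root 4 (\<beta> n) / 4) \<in> O(\<lambda>n. exp (- c * real n)))
    \<and> (\<forall>\<^sub>F n in sequentially. \<exists>E \<in> sets (A n).
            measure (A n) E \<ge> 1 - real (m n) * sqrt (\<beta> n) \<and>
            (\<forall>\<alpha> \<in> E. stat_indist (m n) (N n) (\<lambda>k. outcome_prob (\<rho> n \<alpha>) (M n k)) (\<mu> n)))"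
proof -
  have m_pos: "m n > 0" for n
  proof (rule ccontr)
    assume "\<not> m n > 0" then have "m n = 0" by simp
    then show False using mu_dist(2)[of n] by simp
  qed
  have beta_nonneg: "\<beta> n \<ge> 0" for n
  proof -
    have "measure (A n) {\<alpha> \<in> space (A n). \<bar>outcome_prob (\<rho> n \<alpha>) (M n 0) - \<mu> n 0\<bar> \<ge> 1} \<le> \<beta> n"
      using conc[of 0 n 1] m_pos[of n] by simp
    moreover have "measure (A n) {\<alpha> \<in> space (A n). \<bar>outcome_prob (\<rho> n \<alpha>) (M n 0) - \<mu> n 0\<bar> \<ge> 1} \<ge> 0"
      by (rule measure_nonneg)
    ultimately show ?thesis by linarith
  qed
  have root4_sq: "root 4 x ^ 2 = sqrt x" if "x \<ge> 0" for x :: real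
  proof -
    have "root 4 x = root 2 (root 2 x)" using real_root_mult_exp[of 2 2 x] by simp
    then show ?thesis using that by (simp add: sqrt_def)
  qed
  have P1: "\<exists>E \<in> sets (A n).
            measure (A n) E \<ge> 1 - real (m n) * sqrt (\<beta> n) \<and>
            (\<forall>\<alpha> \<in> E. \<forall>D. is_test D \<longrightarrow>
               success_prob (m n) (N n) (\<lambda>k. outcome_prob (\<rho> n \<alpha>) (M n k)) (\<mu> n) D
                 \<le> 1/2 + real (N n) * real (m n) * root 4 (\<beta> n) / 4)" for n
  proof -
    interpret P: prob_space "A n" by (rule probsp)
    define r where "r = root 4 (\<beta> n)"
    define f where "f k \<alpha> = outcome_prob (\<rho> n \<alpha>) (M n k) - \<mu> n k" for k \<alpha>
    define B where "B k = {\<alpha> \<in> space (A n). r < \<bar>f k \<alpha>\<bar>}" for k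
    define E where "E = space (A n) - (\<Union>k<m n. B k)"
    have fm: "f k \<in> borel_measurable (A n)" if "k < m n" for k
      unfolding f_def[abs_def] using meas[OF that] by measurable
    have Bs: "B k \<in> sets (A n)" if "k < m n" for k
      unfolding B_def using fm[OF that] by measurable
    have Us: "(\<Union>k<m n. B k) \<in> sets (A n)" using Bs by blast
    have Es: "E \<in> sets (A n)" unfolding E_def using Us by blast
    have PB: "measure (A n) (B k) \<le> sqrt (\<beta> n)" if k: "k < m n" for k
    proof (cases "\<beta> n > 0")
      case True
      then have rpos: "r > 0" unfolding r_def by simp
      have r2: "r\<^sup>2 = sqrt (\<beta> n)" unfolding r_def using root4_sq beta_nonneg by blast
      have "B k \<subseteq> {\<alpha> \<in> space (A n). \<bar>outcome_prob (\<rho> n \<alpha>) (M n k) - \<mu> n k\<bar> \<ge> r}"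
        unfolding B_def f_def by auto
      then have "measure (A n) (B k) \<le> measure (A n) {\<alpha> \<in> space (A n). \<bar>outcome_prob (\<rho> n \<alpha>) (M n k) - \<mu> n k\<bar> \<ge> r}"
      proof (rule P.finite_measure_mono)
        show "{\<alpha> \<in> space (A n). \<bar>outcome_prob (\<rho> n \<alpha>) (M n k) - \<mu> n k\<bar> \<ge> r} \<in> sets (A n)"
          using meas[OF k] by measurable
      qed
      also have "\<dots> \<le> \<beta> n / r\<^sup>2" using conc[OF k rpos] .
      also have "\<dots> = sqrt (\<beta> n)" unfolding r2 using True
        by (metis less_eq_real_def real_div_sqrt)
      finally show ?thesis .
    next
      case False
      then have b0: "\<beta> n = 0" using beta_nonneg[of n] by simp
      then have r0: "r = 0" unfolding r_def by simp
      define S where "S j = {\<alpha> \<in> space (A n). \<bar>outcome_prob (\<rho> n \<alpha>) (M n k) - \<mu> n k\<bar> \<ge> 1 / Suc j}" for j :: nat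
      have Ss: "S j \<in> sets (A n)" for j
        unfolding S_def using meas[OF k] by measurable
      have "measure (A n) (S j) \<le> 0" for j
        using conc[OF k, of "1 / Suc j"] b0 unfolding S_def by simp
      then have "S j \<in> null_sets (A n)" for j
        using Ss by (simp add: null_sets_def P.emeasure_eq_measure measure_le_0_iff)
      then have "(\<Union>j. S j) \<in> null_sets (A n)" by blast
      moreover have "B k = (\<Union>j. S j)"
      proof
        show "B k \<subseteq> (\<Union>j. S j)"
        proof
          fix \<alpha> assume a: "\<alpha> \<in> B k"
          then have pos: "\<bar>f k \<alpha>\<bar> > 0" and sp: "\<alpha> \<in> space (A n)" unfolding B_def r0 by auto
          obtain j :: nat where j: "inverse (real (Suc j)) < \<bar>f k \<alpha>\<bar>"
            using reals_Archimedean[OF pos] by blast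
          then have "1 / real (Suc j) \<le> \<bar>f k \<alpha>\<bar>" by (simp add: inverse_eq_divide)
          then have "\<alpha> \<in> S j" using sp unfolding S_def f_def by simp
          then show "\<alpha> \<in> (\<Union>j. S j)" by blast
        qed
        show "(\<Union>j. S j) \<subseteq> B k"
        proof
          fix \<alpha> assume "\<alpha> \<in> (\<Union>j. S j)"
          then obtain j where "\<alpha> \<in> S j" by blast
          then have sp: "\<alpha> \<in> space (A n)" and le: "1 / real (Suc j) \<le> \<bar>f k \<alpha>\<bar>" unfolding S_def f_def by auto
          have "(0::real) < 1 / real (Suc j)" by simp
          then have "0 < \<bar>f k \<alpha>\<bar>" using le by linarith
          then show "\<alpha> \<in> B k" using sp unfolding B_def r0 by blast
        qed
      qed
      ultimately have "measure (A n) (B k) = 0" by (simp add: measure_eq_0_null_sets)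
      then show ?thesis using b0 by simp
    qed
    have "measure (A n) (\<Union>k<m n. B k) \<le> (\<Sum>k<m n. measure (A n) (B k))"
      using Bs by (intro P.finite_measure_subadditive_finite) auto
    also have "\<dots> \<le> (\<Sum>k<m n. sqrt (\<beta> n))" using PB by (intro sum_mono) auto
    also have "\<dots> = real (m n) * sqrt (\<beta> n)" by simp
    finally have U: "measure (A n) (\<Union>k<m n. B k) \<le> real (m n) * sqrt (\<beta> n)" .
    have ME: "measure (A n) E = 1 - measure (A n) (\<Union>k<m n. B k)"
      unfolding E_def using P.prob_compl[OF Us] .
    show ?thesis
    proof (intro bexI[OF _ Es] conjI ballI allI impI)
      show "measure (A n) E \<ge> 1 - real (m n) * sqrt (\<beta> n)" using ME U by simp
    next
      fix \<alpha> D assume aE: "\<alpha> \<in> E" and D: "is_test D"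
      have sp: "\<alpha> \<in> space (A n)" using aE unfolding E_def by auto
      have close: "\<forall>k<m n. \<bar>outcome_prob (\<rho> n \<alpha>) (M n k) - \<mu> n k\<bar> \<le> r"
        using aE unfolding E_def B_def f_def by (auto simp: not_less)
      have p0: "\<forall>k<m n. outcome_prob (\<rho> n \<alpha>) (M n k) \<ge> 0"
        using outcome_nonneg[OF states[OF sp] povm] by blast
      have p1: "(\<Sum>k<m n. outcome_prob (\<rho> n \<alpha>) (M n k)) = 1"
        using povm_sum[OF states[OF sp] povm] .
      show "success_prob (m n) (N n) (\<lambda>k. outcome_prob (\<rho> n \<alpha>) (M n k)) (\<mu> n) D
                 \<le> 1/2 + real (N n) * real (m n) * root 4 (\<beta> n) / 4"
        using success_close[OF p0 _ p1 mu_dist(2) close D] mu_dist(1) unfolding r_def by blast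
    qed
  qed
  obtain d1 :: nat where d1: "(\<lambda>n. real (m n)) \<in> O(\<lambda>n. real n ^ d1)" using m_poly by blast
  obtain d2 :: nat where d2: "(\<lambda>n. real (N n)) \<in> O(\<lambda>n. real n ^ d2)" using N_poly by blast
  have sqrtO: "(\<lambda>n. sqrt (\<beta> n)) \<in> O(\<lambda>n. exp (- real n * (1/2)))"
  proof -
    have "(\<lambda>n. \<bar>\<beta> n\<bar> powr (1/2)) \<in> O(\<lambda>n. \<bar>exp (- real n)\<bar> powr (1/2))"
      by (rule bigo_powr[OF beta_exp]) simp
    moreover have "(\<lambda>n. \<bar>\<beta> n\<bar> powr (1/2)) = (\<lambda>n. sqrt (\<beta> n))"
      using beta_nonneg by (simp add: powr_half_sqrt)
    moreover have "(\<lambda>n. \<bar>exp (- real n)\<bar> powr (1/2)) = (\<lambda>n::nat. exp (- real n * (1/2)))"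
      by (simp add: exp_powr_real)
    ultimately show ?thesis by simp
  qed
  have rootO: "(\<lambda>n. root 4 (\<beta> n)) \<in> O(\<lambda>n. exp (- real n * (1/4)))"
  proof -
    have "(\<lambda>n. \<bar>\<beta> n\<bar> powr (1/4)) \<in> O(\<lambda>n. \<bar>exp (- real n)\<bar> powr (1/4))"
      by (rule bigo_powr[OF beta_exp]) simp
    moreover have "(\<lambda>n. \<bar>\<beta> n\<bar> powr (1/4)) = (\<lambda>n. root 4 (\<beta> n))"
    proof
      fix n
      show "\<bar>\<beta> n\<bar> powr (1/4) = root 4 (\<beta> n)"
      proof (cases "\<beta> n = 0")
        case True then show ?thesis by simp
      next
        case False then have "\<beta> n > 0" using beta_nonneg[of n] by simp
        then show ?thesis using root_powr_inverse[of 4 "\<beta> n"] by simp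
      qed
    qed
    moreover have "(\<lambda>n. \<bar>exp (- real n)\<bar> powr (1/4)) = (\<lambda>n::nat. exp (- real n * (1/4)))"
      by (simp add: exp_powr_real)
    ultimately show ?thesis by simp
  qed
  have P2: "(\<lambda>n. real (m n) * sqrt (\<beta> n)) \<in> O(\<lambda>n. exp (- (1/4) * real n))"
  proof -
    have "(\<lambda>n. real (m n) * sqrt (\<beta> n)) \<in> O(\<lambda>n. real n ^ d1 * exp (- real n * (1/2)))"
      by (rule landau_o.big.mult[OF d1 sqrtO])
    also have "(\<lambda>n::nat. real n ^ d1 * exp (- real n * (1/2))) \<in> O(\<lambda>n. exp (- (1/4) * real n))"
      by real_asymp
    finally show ?thesis .
  qed
  have P3: "(\<lambda>n. real (N n) * real (m n) * root 4 (\<beta> n) / 4) \<in> O(\<lambda>n. exp (- (1/8) * real n))"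
  proof -
    have "(\<lambda>n. real (N n) * real (m n) * root 4 (\<beta> n)) \<in> O(\<lambda>n. real n ^ d2 * real n ^ d1 * exp (- real n * (1/4)))"
      by (intro landau_o.big.mult d1 d2 rootO)
    also have "(\<lambda>n::nat. real n ^ d2 * real n ^ d1 * exp (- real n * (1/4))) \<in> O(\<lambda>n. exp (- (1/8) * real n))"
      by real_asymp
    finally have "(\<lambda>n. real (N n) * real (m n) * root 4 (\<beta> n)) \<in> O(\<lambda>n. exp (- (1/8) * real n))" .
    then show ?thesis by simp
  qed
  have P4: "\<forall>\<^sub>F n in sequentially. \<exists>E \<in> sets (A n).
            measure (A n) E \<ge> 1 - real (m n) * sqrt (\<beta> n) \<and>
            (\<forall>\<alpha> \<in> E. stat_indist (m n) (N n) (\<lambda>k. outcome_prob (\<rho> n \<alpha>) (M n k)) (\<mu> n))"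
  proof -
    have "(\<lambda>n::nat. exp (- (1/8) * real n)) \<in> o(\<lambda>n. 1)" by real_asymp
    with P3 have "(\<lambda>n. real (N n) * real (m n) * root 4 (\<beta> n) / 4) \<in> o(\<lambda>n. 1)"
      by (rule landau_o.big_small_trans)
    from smalloD_tendsto[OF this]
    have "(\<lambda>n. real (N n) * real (m n) * root 4 (\<beta> n) / 4) \<longlonglongrightarrow> 0" by simp
    then have ev: "\<forall>\<^sub>F n in sequentially. real (N n) * real (m n) * root 4 (\<beta> n) / 4 < 1/100"
      by (rule order_tendstoD) simp
    show ?thesis
    proof (rule eventually_mono[OF ev])
      fix n assume small: "real (N n) * real (m n) * root 4 (\<beta> n) / 4 < 1/100"
      obtain E where E: "E \<in> sets (A n)" "measure (A n) E \<ge> 1 - real (m n) * sqrt (\<beta> n)"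
        "\<forall>\<alpha> \<in> E. \<forall>D. is_test D \<longrightarrow>
               success_prob (m n) (N n) (\<lambda>k. outcome_prob (\<rho> n \<alpha>) (M n k)) (\<mu> n) D
                 \<le> 1/2 + real (N n) * real (m n) * root 4 (\<beta> n) / 4"
        using P1[of n] by blast
      show "\<exists>E \<in> sets (A n).
            measure (A n) E \<ge> 1 - real (m n) * sqrt (\<beta> n) \<and>
            (\<forall>\<alpha> \<in> E. stat_indist (m n) (N n) (\<lambda>k. outcome_prob (\<rho> n \<alpha>) (M n k)) (\<mu> n))"
      proof (intro bexI[OF _ E(1)] conjI ballI)
        show "measure (A n) E \<ge> 1 - real (m n) * sqrt (\<beta> n)" by (rule E(2))
      next
        fix \<alpha> assume "\<alpha> \<in> E"
        then show "stat_indist (m n) (N n) (\<lambda>k. outcome_prob (\<rho> n \<alpha>) (M n k)) (\<mu> n)"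
          using E(3) small unfolding stat_indist_def by fastforce
      qed
    qed
  qed
  have Q2: "\<exists>c>0. (\<lambda>n. real (m n) * sqrt (\<beta> n)) \<in> O(\<lambda>n. exp (- c * real n))"
    using P2 by (intro exI[where x="1/4::real"]) simp
  have Q3: "\<exists>c>0. (\<lambda>n. real (N n) * real (m n) * root 4 (\<beta> n) / 4) \<in> O(\<lambda>n. exp (- c * real n))"
    using P3 by (intro exI[where x="1/8::real"]) simp
  show ?thesis using P1 Q2 Q3 P4 by blast
qed


end
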